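(* Let $\mathscr{X}$ be a totally bounded normed metric space with $\|x\|\le1$ for all $x$, consider the $\epsilon$-perturbation channel on $\mathscr{X}$ described in the context, let $0<\epsilon\le1$ and $0\le\delta<m_{\mathscr{Y}}(V_\epsilon)$. Then $$C^\delta_\epsilon=\sup\Big\{ I_{\tilde\delta/|[\![X]\!]|}(Y;X)\ :\ X \text{ a transmitted UV with } [\![X]\!]\subseteq\mathscr{X},\ 0\le\tilde\delta\le \delta/m_{\mathscr{Y}}([\![Y]\!])\Big\}\ \text{bits},$$ where $Y$ is the received UV corresponding to $X$.
   Context: Uncertain variables (UVs): a UV is a map $U$ from a sample space $\Omega$ to a set; jointly considered UVs share $\Omega$. $[\![U]\!]=\{U(\omega)\}$; $[\![U|w]\!]=\{U(\omega):W(\omega)=w\}$, $[\![U|W]\!]=\{[\![U|w]\!]:w\in[\![W]\!]\}$. An uncertainty function on a set $\mathscr{U}$ is a map $m$ on subsets of $\mathscr{U}$ with $m(\emptyset)=0$, $0<m(S)<\infty$ for nonempty $S$, $\max\{m(S_1),m(S_2)\}\le m(S_1\cup S_2)$. $\delta$-mutual information: for UVs $U$ (values in $\mathscr{U}$ with uncertainty function $m_{\mathscr{U}}$) and $W$, points $u,u'\in[\![U]\!]$ are $\delta$-connected via $[\![U|W]\!]$ if there are $w_1,\dots,w_N\in[\![W]\!]$ with $u\in[\![U|w_1]\!]$, $u'\in[\![U|w_N]\!]$, $m_{\mathscr{U}}([\![U|w_i]\!]\cap[\![U|w_{i-1}]\!])/m_{\mathscr{U}}([\![U]\!])>\delta$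 for $1<i\le N$; a set is $\delta$-connected if all pairs of its points are. A $\delta$-overlap family $[\![U|W]\!]^*_\delta$ is a family of distinct subsets covering $[\![U]\!]$, of largest cardinality among covering families such that (i) each member is $\delta$-connected and contains some $[\![U|w]\!]$; (ii) distinct members $S_1,S_2$ satisfy $m_{\mathscr{U}}(S_1\cap S_2)\le\delta\, m_{\mathscr{U}}([\![U]\!])$; (iii) each $[\![U|w]\!]$ lies in some member. $I_\delta(U;W)=\log_2|[\![U|W]\!]^*_\delta|$ if such a family exists, else $0$. Channel: the output space is $\mathscr{Y}=\mathscr{X}$; $m_{\mathscr{X}},m_{\mathscr{Y}}$ are uncertainty functions on $\mathscr{X},\mathscr{Y}$ with $m_{\mathscr{Y}}(\mathscr{Y})=1$. $S_\epsilon(x)=\{y\in\mathscr{Y}:\|x-y\|\le\epsilon\}$; $V_\epsilon=S_\epsilon(x^* )$ where $x^*$ minimizes $m_{\mathscr{Y}}(S_\epsilon(x))$ over $x\in\mathscr{X}$. A codebook is a discrete set $\mathcal{C}\subseteq\mathscr{X}$. $e_\epsilon(x_1,x_2)=m_{\mathscr{Y}}(S_\epsilon(x_1)\cap S_\epsilon(x_2))/m_{\mathscr{Y}}(\mathscr{Y})$. $\mathcal{C}$ is $(\epsilon,\delta)$-distinguishable if $e_\epsilon(x_1,x_2)\le\delta/|\mathcal{C}|$ for all distinct $x_1,x_2\in\mathcal{C}$; $C^\delta_\epsilon=\sup\log_2|\mathcal{C}|$ over $(\epsilon,\delta)$-distinguishable codebooks. For a codebook $\mathcal{C}$, the transmitted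 UV $X$ and received UV $Y$ satisfy $[\![X]\!]=\mathcal{C}$, $[\![Y]\!]=\bigcup_{x\in\mathcal{C}}S_\epsilon(x)$, $[\![Y|x]\!]=\{y\in[\![Y]\!]:\|x-y\|\le\epsilon\}$, $[\![X|y]\!]=\{x\in[\![X]\!]:\|x-y\|\le\epsilon\}$. *)

theory Defs
  imports "HOL-Analysis.Analysis"
begin

definition uncertainty_function :: "'u set \<Rightarrow> ('u set \<Rightarrow> real) \<Rightarrow> bool" where
  "uncertainty_function A m \<longleftrightarrow>
     m {} = 0 \<and> (\<forall>S. S \<subseteq> A \<longrightarrow> S \<noteq> {} \<longrightarrow> 0 < m S) \<and>
     (\<forall>S1 S2. S1 \<subseteq> A \<longrightarrow> S2 \<subseteq> A \<longrightarrow> max (m S1) (m S2) \<le> m (S1 \<union> S2))"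

text \<open>The delta-mutual information I_delta(U;W) depends on U and W only through
  UU = [[U]], the index set WW = [[W]] and cond w = [[U|w]].\<close>
definition delta_connected_pts ::
  "('u set \<Rightarrow> real) \<Rightarrow> 'u set \<Rightarrow> 'w set \<Rightarrow> ('w \<Rightarrow> 'u set) \<Rightarrow> real \<Rightarrow> 'u \<Rightarrow> 'u \<Rightarrow> bool" where
  "delta_connected_pts m UU WW cond \<delta> u u' \<longleftrightarrow>
     u \<in> UU \<and> u' \<in> UU \<and>
     (\<exists>ws. ws \<noteq> [] \<and> set ws \<subseteq> WW \<and> u \<in> cond (hd ws) \<and> u' \<in> cond (last ws) \<and>
        (\<forall>i. 0 < i \<and> i < length ws \<longrightarrow>
            m (cond (ws ! i) \<inter> cond (ws ! (i - 1))) / m UU > \<delta>))"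

definition delta_connected_set ::
  "('u set \<Rightarrow> real) \<Rightarrow> 'u set \<Rightarrow> 'w set \<Rightarrow> ('w \<Rightarrow> 'u set) \<Rightarrow> real \<Rightarrow> 'u set \<Rightarrow> bool" where
  "delta_connected_set m UU WW cond \<delta> S \<longleftrightarrow>
     (\<forall>u\<in>S. \<forall>u'\<in>S. delta_connected_pts m UU WW cond \<delta> u u')"

definition admissible_family ::
  "('u set \<Rightarrow> real) \<Rightarrow> 'u set \<Rightarrow> 'w set \<Rightarrow> ('w \<Rightarrow> 'u set) \<Rightarrow> real \<Rightarrow> 'u set set \<Rightarrow> bool" where
  "admissible_family m UU WW cond \<delta> F \<longleftrightarrow>
     (\<forall>S\<in>F. S \<subseteq> UU) \<and> \<Union>F = UU \<and>
     (\<forall>S\<in>F. delta_connected_set m UU WW cond \<delta> S \<and> (\<exists>w\<in>WW. cond w \<subseteq> S)) \<and>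
     (\<forall>S1\<in>F. \<forall>S2\<in>F. S1 \<noteq> S2 \<longrightarrow> m (S1 \<inter> S2) \<le> \<delta> * m UU) \<and>
     (\<forall>w\<in>WW. \<exists>S\<in>F. cond w \<subseteq> S)"

definition overlap_family ::
  "('u set \<Rightarrow> real) \<Rightarrow> 'u set \<Rightarrow> 'w set \<Rightarrow> ('w \<Rightarrow> 'u set) \<Rightarrow> real \<Rightarrow> 'u set set \<Rightarrow> bool" where
  "overlap_family m UU WW cond \<delta> F \<longleftrightarrow>
     admissible_family m UU WW cond \<delta> F \<and> finite F \<and>
     (\<forall>G. admissible_family m UU WW cond \<delta> G \<longrightarrow> finite G \<and> card G \<le> card F)"

definition I_delta ::
  "('u set \<Rightarrow> real) \<Rightarrow> 'u set \<Rightarrow> 'w set \<Rightarrow> ('w \<Rightarrow> 'u set) \<Rightarrow> real \<Rightarrow> real" where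
  "I_delta m UU WW cond \<delta> =
     (if \<exists>F. overlap_family m UU WW cond \<delta> F
      then log 2 (real (card (SOME F. overlap_family m UU WW cond \<delta> F))) else 0)"

definition S_eps :: "'a::real_normed_vector set \<Rightarrow> real \<Rightarrow> 'a \<Rightarrow> 'a set" where
  "S_eps XX \<epsilon> x = {y \<in> XX. norm (x - y) \<le> \<epsilon>}"

definition e_eps :: "'a::real_normed_vector set \<Rightarrow> ('a set \<Rightarrow> real) \<Rightarrow> real \<Rightarrow> 'a \<Rightarrow> 'a \<Rightarrow> real" where
  "e_eps XX mY \<epsilon> x1 x2 = mY (S_eps XX \<epsilon> x1 \<inter> S_eps XX \<epsilon> x2) / mY XX"

definition codebook :: "'a set \<Rightarrow> 'a set \<Rightarrow> bool" where
  "codebook XX C \<longleftrightarrow> C \<subseteq> XX \<and> finite C \<and> C \<noteq> {}"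

definition distinguishable ::
  "'a::real_normed_vector set \<Rightarrow> ('a set \<Rightarrow> real) \<Rightarrow> real \<Rightarrow> real \<Rightarrow> 'a set \<Rightarrow> bool" where
  "distinguishable XX mY \<epsilon> \<delta> C \<longleftrightarrow>
     (\<forall>x1\<in>C. \<forall>x2\<in>C. x1 \<noteq> x2 \<longrightarrow> e_eps XX mY \<epsilon> x1 x2 \<le> \<delta> / real (card C))"

definition capacity ::
  "'a::real_normed_vector set \<Rightarrow> ('a set \<Rightarrow> real) \<Rightarrow> real \<Rightarrow> real \<Rightarrow> ereal" where
  "capacity XX mY \<epsilon> \<delta> =
     Sup {ereal (log 2 (real (card C))) | C. codebook XX C \<and> distinguishable XX mY \<epsilon> \<delta> C}"

text \<open>Received UV for codebook C: [[Y]] and [[Y|x]].\<close>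
definition Y_range :: "'a::real_normed_vector set \<Rightarrow> real \<Rightarrow> 'a set \<Rightarrow> 'a set" where
  "Y_range XX \<epsilon> C = (\<Union>x\<in>C. S_eps XX \<epsilon> x)"

definition Y_cond :: "'a::real_normed_vector set \<Rightarrow> real \<Rightarrow> 'a set \<Rightarrow> 'a \<Rightarrow> 'a set" where
  "Y_cond XX \<epsilon> C x = {y \<in> Y_range XX \<epsilon> C. norm (x - y) \<le> \<epsilon>}"

end

theory Submission
  imports Defs
begin

lemma uf_mono:
  assumes "uncertainty_function XX m" "A \<subseteq> B" "B \<subseteq> XX"
  shows "m A \<le> m B"
proof -
  have "max (m A) (m B) \<le> m (A \<union> B)"
    using assms unfolding uncertainty_function_def by (meson order_trans)
  moreover have "A \<union> B = B" using assms(2) by blast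
  ultimately show ?thesis by simp
qed

lemma ufpos: "uncertainty_function XX m \<Longrightarrow> S \<subseteq> XX \<Longrightarrow> S \<noteq> {} \<Longrightarrow> 0 < m S"
  by (simp add: uncertainty_function_def)

lemma Y_range_sub: "Y_range XX \<epsilon> C \<subseteq> XX"
  unfolding Y_range_def S_eps_def by blast

lemma cond_eq:
  assumes "x \<in> C"
  shows "Y_cond XX \<epsilon> C x = S_eps XX \<epsilon> x"
  using assms unfolding Y_cond_def Y_range_def S_eps_def by blast

lemma self_in:
  assumes "x \<in> XX" "0 < \<epsilon>"
  shows "x \<in> S_eps XX \<epsilon> x"
  using assms unfolding S_eps_def by simp

lemma upper:
  fixes XX :: "'a::real_normed_vector set"
  assumes uf: "uncertainty_function XX mY"
    and mYX: "mY XX = 1"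
    and eps: "0 < \<epsilon>"
    and xstarmin: "\<forall>x\<in>XX. mY (S_eps XX \<epsilon> xstar) \<le> mY (S_eps XX \<epsilon> x)"
    and d0: "0 \<le> \<delta>" and dlt: "\<delta> < mY (S_eps XX \<epsilon> xstar)"
    and cb: "codebook XX C"
    and d'0: "0 \<le> \<delta>'" and d'le: "\<delta>' \<le> \<delta> / mY (Y_range XX \<epsilon> C)"
    and adm: "admissible_family mY (Y_range XX \<epsilon> C) C (Y_cond XX \<epsilon> C) (\<delta>' / real (card C)) G"
  shows "finite G \<and> card G \<le> card C \<and>
    (\<exists>C'. codebook XX C' \<and> distinguishable XX mY \<epsilon> \<delta> C' \<and> card C' = card G)"
proof -
  let ?UU = "Y_range XX \<epsilon> C"
  let ?cond = "Y_cond XX \<epsilon> C"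
  have CX: "C \<subseteq> XX" "finite C" "C \<noteq> {}" using cb unfolding codebook_def by auto
  have "card C > 0" using CX by (simp add: card_gt_0_iff)
  hence cpos: "real (card C) \<ge> 1" by simp
  obtain x0 where x0: "x0 \<in> C" using CX by blast
  have "x0 \<in> ?UU" using x0 CX self_in[OF _ eps, of x0 XX] unfolding Y_range_def by blast
  hence UUne: "?UU \<noteq> {}" by blast
  have mUU: "mY ?UU > 0" using ufpos[OF uf Y_range_sub UUne] .
  have bound: "\<delta>' / real (card C) * mY ?UU \<le> \<delta> / real (card C)"
  proof -
    have "\<delta>' * mY ?UU \<le> \<delta>" using d'le mUU by (simp add: pos_le_divide_eq)
    thus ?thesis using cpos by (simp add: divide_right_mono)
  qed
  have bound2: "\<delta> / real (card C) \<le> \<delta>" using cpos d0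
    by (simp add: divide_le_eq mult_le_cancel_left1)
  from adm have ex: "\<forall>S\<in>G. \<exists>w\<in>C. ?cond w \<subseteq> S"
    and pair: "\<forall>S1\<in>G. \<forall>S2\<in>G. S1 \<noteq> S2 \<longrightarrow> mY (S1 \<inter> S2) \<le> \<delta>' / real (card C) * mY ?UU"
    and sub: "\<forall>S\<in>G. S \<subseteq> ?UU" and cov: "\<Union>G = ?UU"
    unfolding admissible_family_def by auto
  obtain f where f: "\<forall>S\<in>G. f S \<in> C \<and> ?cond (f S) \<subseteq> S" using ex by metis
  have inj: "inj_on f G"
  proof (rule inj_onI, rule ccontr)
    fix S1 S2 assume s: "S1 \<in> G" "S2 \<in> G" "f S1 = f S2" "S1 \<noteq> S2"
    let ?w = "f S1"
    have wC: "?w \<in> C" using f s by blast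
    have c1: "?cond (f S1) \<subseteq> S1" using f s(1) by blast
    have c2: "?cond (f S2) \<subseteq> S2" using f s(2) by blast
    have "?cond ?w \<subseteq> S1 \<inter> S2" using c1 c2 s(3) by simp
    moreover have "S1 \<inter> S2 \<subseteq> XX" using sub s Y_range_sub by blast
    ultimately have "mY (?cond ?w) \<le> mY (S1 \<inter> S2)" using uf_mono[OF uf] by blast
    also have "\<dots> \<le> \<delta>" using pair s bound bound2 by fastforce
    also have "\<dots> < mY (S_eps XX \<epsilon> xstar)" by (rule dlt)
    also have "\<dots> \<le> mY (?cond ?w)" using xstarmin wC CX cond_eq[OF wC] by auto
    finally show False by simp
  qed
  have img: "f ` G \<subseteq> C" using f by blast
  have finG: "finite G" using inj img CX finite_imageD finite_subset by metis
  have cardG: "card G \<le> card C" using inj img CX card_inj_on_le by metis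
  have Gne: "G \<noteq> {}" using cov UUne by auto
  have cb': "codebook XX (f ` G)" using img CX(1,2) Gne finite_subset unfolding codebook_def by auto
  have cardeq: "card (f ` G) = card G" using inj card_image by blast
  have dist: "distinguishable XX mY \<epsilon> \<delta> (f ` G)"
    unfolding distinguishable_def
  proof (intro ballI impI)
    fix x1 x2 assume x: "x1 \<in> f ` G" "x2 \<in> f ` G" "x1 \<noteq> x2"
    then obtain S1 S2 where s: "S1 \<in> G" "S2 \<in> G" "x1 = f S1" "x2 = f S2" by blast
    have ne: "S1 \<noteq> S2" using s x by blast
    have x1C: "x1 \<in> C" and x2C: "x2 \<in> C" using s f by auto
    have "S_eps XX \<epsilon> x1 \<inter> S_eps XX \<epsilon> x2 \<subseteq> S1 \<inter> S2"
    proof -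
      have c1: "S_eps XX \<epsilon> x1 \<subseteq> S1" using f s(1,3) cond_eq[OF x1C, where XX=XX and \<epsilon>=\<epsilon>] by metis
      have c2: "S_eps XX \<epsilon> x2 \<subseteq> S2" using f s(2,4) cond_eq[OF x2C, where XX=XX and \<epsilon>=\<epsilon>] by metis
      show ?thesis using c1 c2 by blast
    qed
    moreover have "S1 \<inter> S2 \<subseteq> XX" using sub s Y_range_sub by blast
    ultimately have "mY (S_eps XX \<epsilon> x1 \<inter> S_eps XX \<epsilon> x2) \<le> mY (S1 \<inter> S2)"
      using uf_mono[OF uf] by blast
    also have "\<dots> \<le> \<delta> / real (card C)" using pair s ne bound by fastforce
    also have "\<dots> \<le> \<delta> / real (card (f ` G))"
    proof -
      have "card (f ` G) > 0" using cb' unfolding codebook_def by (simp add: card_gt_0_iff)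
      thus ?thesis using cardeq cardG d0 by (simp add: frac_le)
    qed
    finally show "e_eps XX mY \<epsilon> x1 x2 \<le> \<delta> / real (card (f ` G))"
      unfolding e_eps_def mYX by simp
  qed
  show ?thesis using finG cardG cb' dist cardeq by blast
qed

lemma lower_adm:
  fixes XX :: "'a::real_normed_vector set"
  assumes uf: "uncertainty_function XX mY"
    and mYX: "mY XX = 1"
    and eps: "0 < \<epsilon>"
    and xstarmin: "\<forall>x\<in>XX. mY (S_eps XX \<epsilon> xstar) \<le> mY (S_eps XX \<epsilon> x)"
    and d0: "0 \<le> \<delta>" and dlt: "\<delta> < mY (S_eps XX \<epsilon> xstar)"
    and cb: "codebook XX C"
    and dist: "distinguishable XX mY \<epsilon> \<delta> C"
  shows "admissible_family mY (Y_range XX \<epsilon> C) C (Y_cond XX \<epsilon> C)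
            ((\<delta> / mY (Y_range XX \<epsilon> C)) / real (card C)) (S_eps XX \<epsilon> ` C)
         \<and> card (S_eps XX \<epsilon> ` C) = card C"
proof -
  let ?UU = "Y_range XX \<epsilon> C"
  let ?cond = "Y_cond XX \<epsilon> C"
  have CX: "C \<subseteq> XX" "finite C" "C \<noteq> {}" using cb unfolding codebook_def by auto
  have "card C > 0" using CX by (simp add: card_gt_0_iff)
  hence cpos: "real (card C) \<ge> 1" by simp
  obtain x0 where x0: "x0 \<in> C" using CX by blast
  have "x0 \<in> ?UU" using x0 CX self_in[OF _ eps, of x0 XX] unfolding Y_range_def by blast
  hence UUne: "?UU \<noteq> {}" by blast
  have mUU: "mY ?UU > 0" using ufpos[OF uf Y_range_sub UUne] .
  have eqb: "(\<delta> / mY ?UU) / real (card C) * mY ?UU = \<delta> / real (card C)"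
    using mUU by simp
  have bound2: "\<delta> / real (card C) \<le> \<delta>" using cpos d0
    by (simp add: divide_le_eq mult_le_cancel_left1)
  have inj: "inj_on (S_eps XX \<epsilon>) C"
  proof (rule inj_onI, rule ccontr)
    fix x1 x2 assume x: "x1 \<in> C" "x2 \<in> C" "S_eps XX \<epsilon> x1 = S_eps XX \<epsilon> x2" "x1 \<noteq> x2"
    have "mY (S_eps XX \<epsilon> x1) = e_eps XX mY \<epsilon> x1 x2" unfolding e_eps_def mYX using x by simp
    also have "\<dots> \<le> \<delta> / real (card C)" using dist x unfolding distinguishable_def by blast
    also have "\<dots> < mY (S_eps XX \<epsilon> xstar)" using bound2 dlt by linarith
    also have "\<dots> \<le> mY (S_eps XX \<epsilon> x1)" using xstarmin x CX by blast
    finally show False by simp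
  qed
  have adm: "admissible_family mY ?UU C ?cond ((\<delta> / mY ?UU) / real (card C)) (S_eps XX \<epsilon> ` C)"
    unfolding admissible_family_def
  proof (intro conjI ballI impI)
    fix S assume "S \<in> S_eps XX \<epsilon> ` C" thus "S \<subseteq> ?UU" unfolding Y_range_def by blast
  next
    show "\<Union> (S_eps XX \<epsilon> ` C) = ?UU" unfolding Y_range_def by simp
  next
    fix S assume S: "S \<in> S_eps XX \<epsilon> ` C"
    then obtain x where x: "x \<in> C" "S = S_eps XX \<epsilon> x" by blast
    show "delta_connected_set mY ?UU C ?cond ((\<delta> / mY ?UU) / real (card C)) S"
      unfolding delta_connected_set_def delta_connected_pts_def
    proof (intro ballI conjI)
      fix u u' assume u: "u \<in> S" "u' \<in> S"
      show "u \<in> ?UU" "u' \<in> ?UU" using u x unfolding Y_range_def by auto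
      show "\<exists>ws. ws \<noteq> [] \<and> set ws \<subseteq> C \<and> u \<in> ?cond (hd ws) \<and> u' \<in> ?cond (last ws) \<and>
        (\<forall>i. 0 < i \<and> i < length ws \<longrightarrow>
            mY (?cond (ws ! i) \<inter> ?cond (ws ! (i - 1))) / mY ?UU > (\<delta> / mY ?UU) / real (card C))"
        by (rule exI[of _ "[x]"]) (use u x cond_eq[OF x(1)] in auto)
    qed
  next
    fix S assume S: "S \<in> S_eps XX \<epsilon> ` C"
    then obtain x where x: "x \<in> C" "S = S_eps XX \<epsilon> x" by blast
    show "\<exists>w\<in>C. ?cond w \<subseteq> S" using x cond_eq[OF x(1)] by blast
  next
    fix S1 S2 assume s: "S1 \<in> S_eps XX \<epsilon> ` C" "S2 \<in> S_eps XX \<epsilon> ` C" "S1 \<noteq> S2"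
    then obtain x1 x2 where x: "x1 \<in> C" "x2 \<in> C" "S1 = S_eps XX \<epsilon> x1" "S2 = S_eps XX \<epsilon> x2" by blast
    have "x1 \<noteq> x2" using x s by blast
    hence "e_eps XX mY \<epsilon> x1 x2 \<le> \<delta> / real (card C)" using dist x unfolding distinguishable_def by blast
    thus "mY (S1 \<inter> S2) \<le> (\<delta> / mY ?UU) / real (card C) * mY ?UU"
      unfolding eqb using x unfolding e_eps_def mYX by simp
  next
    fix w assume "w \<in> C" thus "\<exists>S\<in>S_eps XX \<epsilon> ` C. ?cond w \<subseteq> S" using cond_eq by blast
  qed
  show ?thesis using adm inj card_image by blast
qed

theorem theorem5:
  fixes XX :: "'a::real_normed_vector set"
    and mX mY :: "'a set \<Rightarrow> real"
    and \<epsilon> \<delta> :: real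
    and xstar :: 'a
  assumes "Met_TC.mtotally_bounded XX"
    and "\<forall>x\<in>XX. norm x \<le> 1"
    and "uncertainty_function XX mX"
    and uf: "uncertainty_function XX mY"
    and mYX: "mY XX = 1"
    and eps: "0 < \<epsilon>" and "\<epsilon> \<le> 1"
    and xs: "xstar \<in> XX"
    and xstarmin: "\<forall>x\<in>XX. mY (S_eps XX \<epsilon> xstar) \<le> mY (S_eps XX \<epsilon> x)"
    and d0: "0 \<le> \<delta>" and dlt: "\<delta> < mY (S_eps XX \<epsilon> xstar)"
  shows "capacity XX mY \<epsilon> \<delta> =
    Sup {ereal (I_delta mY (Y_range XX \<epsilon> C) C (Y_cond XX \<epsilon> C) (\<delta>' / real (card C))) | C \<delta>'.
           codebook XX C \<and> 0 \<le> \<delta>' \<and> \<delta>' \<le> \<delta> / mY (Y_range XX \<epsilon> C)}"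
proof -
  let ?A = "{ereal (log 2 (real (card C))) | C. codebook XX C \<and> distinguishable XX mY \<epsilon> \<delta> C}"
  let ?B = "{ereal (I_delta mY (Y_range XX \<epsilon> C) C (Y_cond XX \<epsilon> C) (\<delta>' / real (card C))) | C \<delta>'.
           codebook XX C \<and> 0 \<le> \<delta>' \<and> \<delta>' \<le> \<delta> / mY (Y_range XX \<epsilon> C)}"
  have AB: "\<forall>a\<in>?A. \<exists>b\<in>?B. a \<le> b"
  proof
    fix a assume "a \<in> ?A"
    then obtain C where C: "a = ereal (log 2 (real (card C)))" "codebook XX C"
      "distinguishable XX mY \<epsilon> \<delta> C" by blast
    let ?UU = "Y_range XX \<epsilon> C"
    let ?d' = "\<delta> / mY ?UU"
    have CX: "C \<subseteq> XX" "finite C" "C \<noteq> {}" using C unfolding codebook_def by auto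
    obtain x0 where x0: "x0 \<in> C" using CX by blast
    have "x0 \<in> ?UU" using x0 CX self_in[OF _ eps, of x0 XX] unfolding Y_range_def by blast
    hence "?UU \<noteq> {}" by blast
    hence mUU: "mY ?UU > 0" using ufpos[OF uf Y_range_sub] by blast
    have d'0: "0 \<le> ?d'" using d0 mUU by simp
    note L = lower_adm[OF uf mYX eps xstarmin d0 dlt C(2) C(3)]
    have ov: "overlap_family mY ?UU C (Y_cond XX \<epsilon> C) (?d' / real (card C)) (S_eps XX \<epsilon> ` C)"
      unfolding overlap_family_def
      using L CX upper[OF uf mYX eps xstarmin d0 dlt C(2) d'0 order_refl] by auto
    define F where "F = (SOME F. overlap_family mY ?UU C (Y_cond XX \<epsilon> C) (?d' / real (card C)) F)"
    have ovF: "overlap_family mY ?UU C (Y_cond XX \<epsilon> C) (?d' / real (card C)) F"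
      unfolding F_def using ov by (rule someI)
    have "card (S_eps XX \<epsilon> ` C) \<le> card F" using ovF L unfolding overlap_family_def by blast
    hence le: "card C \<le> card F" using L by simp
    have cp: "card C > 0" using CX by (simp add: card_gt_0_iff)
    have "I_delta mY ?UU C (Y_cond XX \<epsilon> C) (?d' / real (card C)) = log 2 (real (card F))"
      unfolding I_delta_def F_def using ov by auto
    moreover have "log 2 (real (card C)) \<le> log 2 (real (card F))"
      using le cp by simp
    ultimately have "a \<le> ereal (I_delta mY ?UU C (Y_cond XX \<epsilon> C) (?d' / real (card C)))"
      using C(1) by simp
    moreover have "ereal (I_delta mY ?UU C (Y_cond XX \<epsilon> C) (?d' / real (card C))) \<in> ?B"
      using C(2) d'0 by blast
    ultimately show "\<exists>b\<in>?B. a \<le> b" by blast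
  qed
  have BA: "\<forall>b\<in>?B. \<exists>a\<in>?A. b \<le> a"
  proof
    fix b assume "b \<in> ?B"
    then obtain C d' where C: "b = ereal (I_delta mY (Y_range XX \<epsilon> C) C (Y_cond XX \<epsilon> C) (d' / real (card C)))"
      "codebook XX C" "0 \<le> d'" "d' \<le> \<delta> / mY (Y_range XX \<epsilon> C)" by blast
    show "\<exists>a\<in>?A. b \<le> a"
    proof (cases "\<exists>F. overlap_family mY (Y_range XX \<epsilon> C) C (Y_cond XX \<epsilon> C) (d' / real (card C)) F")
      case True
      define F where "F = (SOME F. overlap_family mY (Y_range XX \<epsilon> C) C (Y_cond XX \<epsilon> C) (d' / real (card C)) F)"
      have ovF: "overlap_family mY (Y_range XX \<epsilon> C) C (Y_cond XX \<epsilon> C) (d' / real (card C)) F"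
        unfolding F_def using True by (metis someI)
      have bF: "b = ereal (log 2 (real (card F)))" unfolding C(1) I_delta_def F_def using True by auto
      obtain C' where C': "codebook XX C'" "distinguishable XX mY \<epsilon> \<delta> C'" "card C' = card F"
        using upper[OF uf mYX eps xstarmin d0 dlt C(2) C(3) C(4)] ovF
        unfolding overlap_family_def by blast
      have "ereal (log 2 (real (card C'))) \<in> ?A" using C'(1,2) by blast
      thus ?thesis using bF C'(3) by force
    next
      case False
      have b0: "b = 0" unfolding C(1) I_delta_def using False by (simp only: if_False) simp
      have "codebook XX {xstar}" using xs unfolding codebook_def by simp
      moreover have "distinguishable XX mY \<epsilon> \<delta> {xstar}" unfolding distinguishable_def by simp
      ultimately have "ereal (log 2 (real (card {xstar}))) \<in> ?A" by blast
      thus ?thesis using b0 by (intro bexI[of _ "ereal (log 2 (real (card {xstar})))"]) (auto simp: zero_ereal_def)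
    qed
  qed
  have "Sup ?A \<le> Sup ?B" by (rule Sup_mono) (use AB in blast)
  moreover have "Sup ?B \<le> Sup ?A" by (rule Sup_mono) (use BA in blast)
  ultimately show ?thesis unfolding capacity_def by (rule antisym)
qed

end
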